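(* Let $f\colon\mathbb{Z}_p^r\to\mathbb{Q}_p$ be a continuous function such that $f(\overline{x})\neq 0$ for all $\overline{x}\in\mathbb{Z}_p^r$. Then $R(f)$ is not dense in $\mathbb{Q}_p$.
   Context: For a function $f$ on $\mathbb{Z}_p^r$, $R(f)=\{f(\overline{x})/f(\overline{y}) : \overline{x},\overline{y}\in\mathbb{Z}^r,\ f(\overline{y})\neq 0\}$; density is in the $p$-adic topology. *)

theory Defs
  imports "HOL-Analysis.Analysis" "HOL-Computational_Algebra.Primes"
    "HOL-Computational_Algebra.Fraction_Field"
begin

text \<open>
  The prime p is encoded as the
  cardinality of a finite type 'p (class prime_card), so that Z_p can be a type.
  Z_p is the inverse limit of the rings Z / p^n Z: an element is a compatible sequence
  of residues x n in [0, p^n).  Q_p is the fraction field of Z_p.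
\<close>

class prime_card = finite +
  assumes prime_card: "prime CARD('a)"

definition zp_set :: "nat \<Rightarrow> (nat \<Rightarrow> int) set" where
  "zp_set p = {x. \<forall>n. 0 \<le> x n \<and> x n < int p ^ n \<and> x (Suc n) mod (int p ^ n) = x n}"

lemma zp_compat:
  "x \<in> zp_set p \<Longrightarrow> x (Suc n) mod (int p ^ n) = x n mod (int p ^ n)"
  unfolding zp_set_def by auto

lemma zp_compat_mod:
  "x \<in> zp_set p \<Longrightarrow> x n mod (int p ^ n) = x n"
  unfolding zp_set_def by auto

lemma zp_set_modI:
  assumes "p > 0" and "\<And>n. g (Suc n) mod (int p ^ n) = g n mod (int p ^ n)"
  shows "(\<lambda>n. g n mod (int p ^ n)) \<in> zp_set p"
proof -
  have dv: "int p ^ n dvd int p ^ Suc n" for n by simp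
  have "(g (Suc n) mod int p ^ Suc n) mod int p ^ n = g n mod int p ^ n" for n
    using mod_mod_cancel[OF dv] assms(2) by metis
  with assms(1) show ?thesis by (auto simp: zp_set_def)
qed

lemma zp_closed2:
  assumes "p > 0" "x \<in> zp_set p" "y \<in> zp_set p"
    and cong: "\<And>a b a' b' c. a mod c = a' mod c \<Longrightarrow> b mod c = b' mod c \<Longrightarrow> g a b mod c = g a' b' mod c"
  shows "(\<lambda>n. g (x n) (y n) mod (int p ^ n)) \<in> zp_set p"
  by (rule zp_set_modI[OF assms(1)], rule cong) (simp_all add: zp_compat[OF assms(2)] zp_compat[OF assms(3)])

lemma zp_closed1:
  assumes "p > 0" "x \<in> zp_set p"
    and cong: "\<And>a a' c. a mod c = a' mod c \<Longrightarrow> g a mod c = g a' mod c"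
  shows "(\<lambda>n. g (x n) mod (int p ^ n)) \<in> zp_set p"
  by (rule zp_set_modI[OF assms(1)], rule cong) (simp add: zp_compat[OF assms(2)])

typedef ('p::finite) zp = "zp_set CARD('p)"
  by (rule exI[of _ "\<lambda>n. 0"]) (simp add: zp_set_def)

setup_lifting type_definition_zp

instantiation zp :: (prime_card) comm_ring_1
begin

lift_definition zero_zp :: "'a zp" is "\<lambda>n. 0" by (simp add: zp_set_def)

lift_definition one_zp :: "'a zp" is "\<lambda>n. 1 mod (int CARD('a) ^ n)"
  by (rule zp_set_modI) simp_all

lift_definition plus_zp :: "'a zp \<Rightarrow> 'a zp \<Rightarrow> 'a zp" is
  "\<lambda>x y n. (x n + y n) mod (int CARD('a) ^ n)"
  by (rule zp_closed2[where g="(+)"], simp, assumption, assumption, erule (1) mod_add_cong)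

lift_definition uminus_zp :: "'a zp \<Rightarrow> 'a zp" is
  "\<lambda>x n. (- x n) mod (int CARD('a) ^ n)"
  by (rule zp_closed1[where g="uminus"], simp, assumption, erule mod_minus_cong)

lift_definition minus_zp :: "'a zp \<Rightarrow> 'a zp \<Rightarrow> 'a zp" is
  "\<lambda>x y n. (x n - y n) mod (int CARD('a) ^ n)"
  by (rule zp_closed2[where g="(-)"], simp, assumption, assumption, erule (1) mod_diff_cong)

lift_definition times_zp :: "'a zp \<Rightarrow> 'a zp \<Rightarrow> 'a zp" is
  "\<lambda>x y n. (x n * y n) mod (int CARD('a) ^ n)"
  by (rule zp_closed2[where g="(*)"], simp, assumption, assumption, erule (1) mod_mult_cong)

instance
proof
  fix a b c :: "'a zp"
  show "a * b * c = a * (b * c)"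
    by transfer (simp add: mod_mult_left_eq mod_mult_right_eq mult.assoc)
  show "a * b = b * a" by transfer (simp add: mult.commute)
  show "1 * a = a" by transfer (simp add: mod_mult_left_eq zp_compat_mod)
  show "a + b + c = a + (b + c)"
    by transfer (simp add: mod_add_left_eq mod_add_right_eq add.assoc)
  show "a + b = b + a" by transfer (simp add: add.commute)
  show "0 + a = a" by transfer (simp add: zp_compat_mod)
  show "- a + a = 0" by transfer (simp add: mod_add_left_eq)
  show "a - b = a + - b" by transfer (simp add: mod_add_right_eq)
  show "(a + b) * c = a * c + b * c"
    by transfer (simp add: mod_mult_left_eq mod_add_eq distrib_right)
  show "(0::'a zp) \<noteq> 1"
  proof transfer
    show "(\<lambda>n. 0) \<noteq> (\<lambda>n. 1 mod int CARD('a) ^ n)"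
    proof
      assume h: "(\<lambda>n::nat. 0::int) = (\<lambda>n. 1 mod int CARD('a) ^ n)"
      have "CARD('a) \<ge> 2" using prime_card prime_ge_2_nat by blast
      then have "(1::int) mod (int CARD('a) ^ 1) = 1" by simp
      moreover have "(0::int) = 1 mod (int CARD('a) ^ 1)" using fun_cong[OF h, of 1] by simp
      ultimately show False by simp
    qed
  qed
qed

end


lemma zp_x0: "x \<in> zp_set p \<Longrightarrow> x 0 = 0"
proof -
  assume "x \<in> zp_set p"
  then have "0 \<le> x 0 \<and> x 0 < int p ^ 0" unfolding zp_set_def by blast
  then show "x 0 = 0" by simp
qed

lemma zp_compat_le:
  assumes "x \<in> zp_set p" "k \<le> n"
  shows "x n mod (int p ^ k) = x k"
  using assms(2)
proof (induction n)
  case 0 then show ?case using zp_x0[OF assms(1)] by simp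
next
  case (Suc n)
  show ?case
  proof (cases "k = Suc n")
    case True then show ?thesis using zp_compat_mod[OF assms(1), of "Suc n"] by simp
  next
    case False
    then have kn: "k \<le> n" using Suc.prems by simp
    have dv: "int p ^ k dvd int p ^ n" using kn by (simp add: le_imp_power_dvd)
    have "x (Suc n) mod int p ^ k = (x (Suc n) mod int p ^ n) mod int p ^ k"
      using mod_mod_cancel[OF dv] by simp
    also have "\<dots> = x n mod int p ^ k" using zp_compat_mod[OF assms(1)] zp_compat[OF assms(1)]
      by metis
    also have "\<dots> = x k" using Suc.IH[OF kn] .
    finally show ?thesis .
  qed
qed

lemma zp_val_exists:
  assumes x: "x \<in> zp_set p" and p: "prime p" and nz: "x \<noteq> (\<lambda>n. 0)"
  shows "\<exists>a. \<forall>n>a. \<exists>s. x n = int p ^ a * s \<and> \<not> int p dvd s"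
proof -
  obtain m where m: "x m \<noteq> 0" using nz by auto
  have x0: "x 0 = 0" using zp_x0[OF x] .
  then obtain j where j: "m = Suc j" using m by (cases m) auto
  define a where "a = (LEAST j. x (Suc j) \<noteq> 0)"
  have xa1: "x (Suc a) \<noteq> 0" unfolding a_def by (rule LeastI[of _ j]) (use m j in simp)
  have xa: "x a = 0"
  proof (cases a)
    case 0 then show ?thesis using x0 by simp
  next
    case (Suc i)
    then have "i < a" by simp
    then have "\<not> x (Suc i) \<noteq> 0" unfolding a_def by (rule not_less_Least)
    then show ?thesis using Suc by simp
  qed
  have "\<exists>s. x n = int p ^ a * s \<and> \<not> int p dvd s" if "n > a" for n
  proof -
    have "x n mod int p ^ a = 0" using zp_compat_le[OF x, of a n] that xa by simp
    then obtain s where s: "x n = int p ^ a * s" by (auto elim: dvdE)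
    have "x n mod int p ^ Suc a = x (Suc a)" using zp_compat_le[OF x, of "Suc a" n] that by simp
    then have "\<not> int p ^ Suc a dvd x n" using xa1 by auto
    then have "\<not> int p dvd s" using s by (auto simp: mult_dvd_mono)
    then show ?thesis using s by blast
  qed
  then show ?thesis by blast
qed

instance zp :: (prime_card) idom
proof
  fix a b :: "'a zp"
  assume "a \<noteq> 0" "b \<noteq> 0"
  then show "a * b \<noteq> 0"
  proof transfer
    fix x y assume x: "x \<in> zp_set CARD('a)" and y: "y \<in> zp_set CARD('a)"
      and nx: "x \<noteq> (\<lambda>n. 0)" and ny: "y \<noteq> (\<lambda>n. 0)"
    define p where "p = CARD('a)"
    have p: "prime p" unfolding p_def by (rule prime_card)
    have pi: "prime (int p)" using p by simp
    obtain a where a: "\<forall>n>a. \<exists>s. x n = int p ^ a * s \<and> \<not> int p dvd s"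
      using zp_val_exists[OF x[folded p_def] p nx] by blast
    obtain b where b: "\<forall>n>b. \<exists>s. y n = int p ^ b * s \<and> \<not> int p dvd s"
      using zp_val_exists[OF y[folded p_def] p ny] by blast
    define N where "N = Suc (a + b)"
    have Na: "N > a" and Nb: "N > b" by (simp_all add: N_def)
    obtain s where s: "x N = int p ^ a * s" "\<not> int p dvd s" using a[rule_format, OF Na] by blast
    obtain t where t: "y N = int p ^ b * t" "\<not> int p dvd t" using b[rule_format, OF Nb] by blast
    have st: "\<not> int p dvd s * t" using s(2) t(2) pi prime_dvd_mult_iff by blast
    have "(x N * y N) mod int p ^ N \<noteq> 0"
    proof
      assume "(x N * y N) mod int p ^ N = 0"
      then have "int p ^ (a + b) * int p dvd int p ^ (a + b) * (s * t)"
        using s(1) t(1) by (auto simp: N_def power_add algebra_simps)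
      then have "int p dvd s * t" using pi
        by (subst (asm) dvd_mult_cancel_left) (auto simp: prime_gt_0_int)
      then show False using st by blast
    qed
    then show "(\<lambda>n. (x n * y n) mod int CARD('a) ^ n) \<noteq> (\<lambda>n. 0)"
      unfolding p_def by (metis (mono_tags))
  qed
qed


section \<open>The p-adic numbers and the p-adic absolute value\<close>

type_synonym 'p qp = "'p zp fract"

text \<open>p-adic valuation of a nonzero p-adic integer: the largest a with x = 0 mod p^a,
  i.e. the least n such that the residue of x modulo p^(n+1) is nonzero.\<close>
definition zp_val :: "'p::finite zp \<Rightarrow> nat" where
  "zp_val x = (LEAST n. Rep_zp x (Suc n) \<noteq> 0)"

text \<open>p-adic absolute value on Q_p: |a/b|_p = p^(v(b) - v(a)), computed on any
  representative a/b (well defined since the valuation is additive).\<close>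
definition qp_abs :: "'p::prime_card qp \<Rightarrow> real" where
  "qp_abs q = (if q = 0 then 0 else
     (let (a, b) = (SOME (a, b). b \<noteq> 0 \<and> q = Fract a b)
      in real CARD('p) powi (int (zp_val b) - int (zp_val a))))"

definition zp_to_qp :: "'p::prime_card zp \<Rightarrow> 'p qp" where
  "zp_to_qp u = Fract u 1"

text \<open>Continuity of a map Z_p^r \<rightarrow> Q_p, where Z_p^r ('r \<Rightarrow> 'p zp with 'r a finite
  index type of cardinality r) carries the product topology, given by the max-metric.\<close>
definition padic_continuous :: "(('r::finite \<Rightarrow> 'p::prime_card zp) \<Rightarrow> 'p qp) \<Rightarrow> bool" where
  "padic_continuous f \<longleftrightarrow>
     (\<forall>x. \<forall>\<epsilon>>0. \<exists>\<delta>>0. \<forall>y. (\<forall>i. qp_abs (zp_to_qp (y i - x i)) < \<delta>)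
        \<longrightarrow> qp_abs (f y - f x) < \<epsilon>)"

definition padic_dense :: "'p::prime_card qp set \<Rightarrow> bool" where
  "padic_dense S \<longleftrightarrow> (\<forall>z. \<forall>\<epsilon>>0. \<exists>w\<in>S. qp_abs (w - z) < \<epsilon>)"

definition ratio_set :: "(('r::finite \<Rightarrow> 'p::prime_card zp) \<Rightarrow> 'p qp) \<Rightarrow> 'p qp set" where
  "ratio_set f = {f (\<lambda>i. of_int (x i)) / f (\<lambda>i. of_int (y i)) | x y :: 'r \<Rightarrow> int.
                   f (\<lambda>i. of_int (y i)) \<noteq> 0}"

end

theory Submission
  imports Defs
begin

context
  fixes tyvar :: "'p::prime_card itself"
begin

lemma p_ge2: "CARD('p::prime_card) \<ge> 2"
  using prime_card prime_ge_2_nat by blast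

lemma rep_in: "Rep_zp (x::'p::prime_card zp) \<in> zp_set CARD('p)"
  by (rule Rep_zp)

lemma rep_le: "k \<le> n \<Longrightarrow> Rep_zp (x::'p::prime_card zp) n mod (int CARD('p))^k = Rep_zp x k"
  by (rule zp_compat_le[OF rep_in])

lemma rep0: "Rep_zp (x::'p::prime_card zp) 0 = 0"
  by (rule zp_x0[OF rep_in])

lemma rep_zero: "Rep_zp (0::'p::prime_card zp) = (\<lambda>n. 0)"
  by (simp add: zero_zp.rep_eq)

lemma L1: assumes "(x::'p::prime_card zp) \<noteq> 0" shows "\<exists>n. Rep_zp x (Suc n) \<noteq> 0"
proof -
  have "Rep_zp x \<noteq> Rep_zp (0::'p zp)"
  proof
    assume "Rep_zp x = Rep_zp (0::'p zp)"
    then have "x = 0" by (rule Rep_zp_inject[THEN iffD1])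
    with assms show False by simp
  qed
  then have "Rep_zp x \<noteq> (\<lambda>n. 0)" using rep_zero by simp
  then obtain n where n: "Rep_zp x n \<noteq> 0" by blast
  show ?thesis
  proof (cases n)
    case 0 then show ?thesis using n rep0[of x] by simp
  next
    case (Suc m) then show ?thesis using n by blast
  qed
qed

lemma L2: "(x::'p::prime_card zp) \<noteq> 0 \<Longrightarrow> Rep_zp x (Suc (zp_val x)) \<noteq> 0"
  unfolding zp_val_def using L1 by (rule LeastI_ex)

lemma L3: "j < zp_val (x::'p::prime_card zp) \<Longrightarrow> Rep_zp x (Suc j) = 0"
  unfolding zp_val_def using not_less_Least by blast

lemma L3': "k \<le> zp_val (x::'p::prime_card zp) \<Longrightarrow> Rep_zp x k = 0"
  by (cases k) (auto simp: rep0 L3)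

lemma L4: assumes "(x::'p::prime_card zp) \<noteq> 0" "Rep_zp x n = 0" shows "n \<le> zp_val x"
proof (rule ccontr)
  assume "\<not> n \<le> zp_val x"
  then have "Suc (zp_val x) \<le> n" by simp
  then have "Rep_zp x (Suc (zp_val x)) = Rep_zp x n mod (int CARD('p))^(Suc (zp_val x))"
    using rep_le by metis
  then show False using assms L2 by simp
qed

lemma L6: assumes "(x::'p::prime_card zp) \<noteq> 0" "Rep_zp x k = 0" "Rep_zp x (Suc k) \<noteq> 0"
  shows "zp_val x = k"
proof -
  have "k \<le> zp_val x" using L4 assms by blast
  moreover have "\<not> Suc k \<le> zp_val x" using L3' assms(3) by blast
  ultimately show ?thesis by simp
qed

lemma L5: assumes "(x::'p::prime_card zp) \<noteq> 0" "zp_val x < n"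
  shows "\<exists>s. Rep_zp x n = (int CARD('p))^(zp_val x) * s \<and> \<not> int CARD('p) dvd s"
proof -
  let ?p = "int CARD('p)" let ?v = "zp_val x"
  have "Rep_zp x n mod ?p^?v = 0" using rep_le[of ?v n x] L3'[of ?v x] assms by simp
  then obtain s where s: "Rep_zp x n = ?p^?v * s" by (auto elim: dvdE)
  have "\<not> ?p dvd s"
  proof
    assume "?p dvd s"
    then have "?p^(Suc ?v) dvd Rep_zp x n" using s by (auto simp: mult_dvd_mono)
    then have "Rep_zp x (Suc ?v) = 0" using rep_le[of "Suc ?v" n x] assms by simp
    then show False using L2 assms by blast
  qed
  then show ?thesis using s by blast
qed

lemma val_mult: assumes "(x::'p::prime_card zp) \<noteq> 0" "y \<noteq> 0"
  shows "zp_val (x*y) = zp_val x + zp_val y"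
proof -
  let ?p = "int CARD('p)" let ?a = "zp_val x" let ?b = "zp_val y"
  define n where "n = Suc (?a + ?b)"
  obtain s where s: "Rep_zp x n = ?p^?a * s" "\<not> ?p dvd s" using L5[OF assms(1), of n] n_def by auto
  obtain t where t: "Rep_zp y n = ?p^?b * t" "\<not> ?p dvd t" using L5[OF assms(2), of n] n_def by auto
  have pi: "prime ?p" using prime_card by simp
  have st: "\<not> ?p dvd s * t" using s(2) t(2) pi prime_dvd_mult_iff by blast
  have "Rep_zp (x*y) n = (?p^(?a+?b) * (s*t)) mod (?p^(?a+?b) * ?p)"
    using s t by (simp add: times_zp.rep_eq n_def power_add algebra_simps)
  also have "\<dots> = ?p^(?a+?b) * ((s*t) mod ?p)" by (rule mod_mult_mult1)
  finally have e: "Rep_zp (x*y) n = ?p^(?a+?b) * ((s*t) mod ?p)" .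
  have "(s*t) mod ?p \<noteq> 0" using st by (simp add: dvd_eq_mod_eq_0)
  then have ne: "Rep_zp (x*y) n \<noteq> 0" using e p_ge2 by simp
  have z: "Rep_zp (x*y) (?a+?b) = 0"
    using rep_le[of "?a+?b" n "x*y"] e n_def by simp
  show ?thesis using L6[of "x*y" "?a+?b"] ne z assms n_def by simp
qed

lemma val_add: assumes "(x::'p::prime_card zp) \<noteq> 0" "y \<noteq> 0" "x + y \<noteq> 0"
  shows "min (zp_val x) (zp_val y) \<le> zp_val (x+y)"
proof -
  let ?m = "min (zp_val x) (zp_val y)"
  have "Rep_zp (x+y) ?m = 0" using L3'[of ?m x] L3'[of ?m y] by (simp add: plus_zp.rep_eq)
  then show ?thesis using L4 assms by blast
qed

lemma val_one: "zp_val (1::'p::prime_card zp) = 0"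
proof -
  have "Rep_zp (1::'p zp) 1 = 1" using p_ge2 by (simp add: one_zp.rep_eq)
  then show ?thesis using L6[of "1::'p zp" 0] rep0 by simp
qed

lemma val_uminus: assumes "(x::'p::prime_card zp) \<noteq> 0" shows "zp_val (-x) = zp_val x"
proof -
  have "zp_val ((-1::'p zp) * (-1)) = zp_val (-1::'p zp) + zp_val (-1::'p zp)"
    by (rule val_mult) simp_all
  then have "zp_val (-1::'p zp) = 0" using val_one by simp
  then show ?thesis using val_mult[of "-1" x] assms by simp
qed


lemma rep_bnd: "0 \<le> Rep_zp (x::'p zp) n \<and> Rep_zp x n < int CARD('p)^n"
  using rep_in[of x] unfolding zp_set_def by blast

lemma fract_nz: "(a::'p zp) \<noteq> 0 \<Longrightarrow> b \<noteq> 0 \<Longrightarrow> Fract a b \<noteq> 0"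
  by (simp add: eq_fract(1) Zero_fract_def)

lemma Q1: assumes "(a::'p zp) \<noteq> 0" "b \<noteq> 0"
  shows "qp_abs (Fract a b) = real CARD('p) powi (int (zp_val b) - int (zp_val a))"
proof -
  have nz: "Fract a b \<noteq> 0" using assms fract_nz by blast
  obtain a' b' where ab: "(SOME (a', b'). b' \<noteq> 0 \<and> Fract a b = Fract a' b') = (a', b')"
    by (cases "(SOME (a', b'). b' \<noteq> 0 \<and> Fract a b = Fract a' b')") auto
  have ex: "\<exists>x. (\<lambda>(a', b'). b' \<noteq> 0 \<and> Fract a b = Fract a' b') x"
    using assms by (intro exI[of _ "(a,b)"]) simp
  have "(\<lambda>(a', b'). b' \<noteq> 0 \<and> Fract a b = Fract a' b') (a', b')"
    using someI_ex[OF ex] unfolding ab .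
  then have b': "b' \<noteq> 0" and e: "Fract a b = Fract a' b'" by auto
  have e2: "a * b' = a' * b" using e eq_fract(1)[OF assms(2) b'] by blast
  have a': "a' \<noteq> 0" using e2 assms b' by auto
  have "zp_val (a * b') = zp_val (a' * b)" using e2 by simp
  then have v: "zp_val a + zp_val b' = zp_val a' + zp_val b"
    using val_mult assms a' b' by simp
  have "qp_abs (Fract a b) = real CARD('p) powi (int (zp_val b') - int (zp_val a'))"
    unfolding qp_abs_def using nz ab by simp
  also have "int (zp_val b') - int (zp_val a') = int (zp_val b) - int (zp_val a)" using v by linarith
  finally show ?thesis .
qed

lemma Pgt1: "real CARD('p) > 1" using p_ge2 by simp

lemma Q0: "qp_abs (0::'p qp) = 0" by (simp add: qp_abs_def)

lemma Qpos: "(q::'p qp) \<noteq> 0 \<Longrightarrow> qp_abs q > 0"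
proof (cases q rule: Fract_cases_nonzero)
  case (Fract a b) then show ?thesis using Q1 Pgt1 by simp
qed auto

lemma Qnn: "qp_abs (q::'p qp) \<ge> 0"
  using Qpos[of q] Q0 by (cases "q = 0") auto

lemma Qdiv: assumes "(q::'p qp) \<noteq> 0" "r \<noteq> 0" shows "qp_abs (q / r) = qp_abs q / qp_abs r"
proof -
  obtain a b where q: "q = Fract a b" "b \<noteq> 0" "a \<noteq> 0" using assms(1) by (cases q rule: Fract_cases_nonzero) auto
  obtain c d where r: "r = Fract c d" "d \<noteq> 0" "c \<noteq> 0" using assms(2) by (cases r rule: Fract_cases_nonzero) auto
  have "q / r = Fract (a*d) (b*c)" using q r by simp
  then have "qp_abs (q / r) = real CARD('p) powi (int (zp_val (b*c)) - int (zp_val (a*d)))"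
    using Q1 q r by simp
  also have "int (zp_val (b*c)) - int (zp_val (a*d)) = (int (zp_val b) - int (zp_val a)) - (int (zp_val d) - int (zp_val c))"
    using val_mult q r by simp
  also have "real CARD('p) powi \<dots> = qp_abs q / qp_abs r"
    using Q1 q r Pgt1 by (simp add: power_int_diff)
  finally show ?thesis .
qed

lemma Qadd: "qp_abs ((q::'p qp) + r) \<le> max (qp_abs q) (qp_abs r)"
proof (cases "q = 0 \<or> r = 0 \<or> q + r = 0")
  case True then show ?thesis using Q0 Qnn[of q] Qnn[of r] by (auto simp: le_max_iff_disj)
next
  case False
  obtain a b where q: "q = Fract a b" "b \<noteq> 0" "a \<noteq> 0" using False by (cases q rule: Fract_cases_nonzero) auto
  obtain c d where r: "r = Fract c d" "d \<noteq> 0" "c \<noteq> 0" using False by (cases r rule: Fract_cases_nonzero) auto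
  have s: "q + r = Fract (a*d + c*b) (b*d)" using q r by simp
  have nz: "a*d + c*b \<noteq> 0" using s False by (auto simp: fract_collapse)
  have "min (zp_val (a*d)) (zp_val (c*b)) \<le> zp_val (a*d + c*b)"
    using val_add nz q r by simp
  then have m: "min (zp_val a + zp_val d) (zp_val c + zp_val b) \<le> zp_val (a*d + c*b)"
    using val_mult q r by simp
  have e: "qp_abs (q + r) = real CARD('p) powi (int (zp_val b + zp_val d) - int (zp_val (a*d + c*b)))"
    using s Q1 nz q r val_mult by simp
  show ?thesis
  proof (cases "zp_val a + zp_val d \<le> zp_val c + zp_val b")
    case True
    then have "qp_abs (q + r) \<le> real CARD('p) powi (int (zp_val b) - int (zp_val a))"
      unfolding e using m Pgt1 by (intro power_int_increasing) auto
    then show ?thesis using Q1 q by simp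
  next
    case False
    then have "qp_abs (q + r) \<le> real CARD('p) powi (int (zp_val d) - int (zp_val c))"
      unfolding e using m Pgt1 by (intro power_int_increasing) auto
    then show ?thesis using Q1 r by simp
  qed
qed

lemma Qneg: "qp_abs (- (q::'p qp)) = qp_abs q"
proof (cases q rule: Fract_cases_nonzero)
  case (Fract a b) then show ?thesis using Q1 val_uminus by simp
qed simp

lemma Qball: assumes "Rep_zp (u::'p zp) n = 0"
  shows "qp_abs (zp_to_qp u) \<le> real CARD('p) powi (- int n)"
proof (cases "u = 0")
  case True then show ?thesis using Q0 by (simp add: zp_to_qp_def fract_collapse)
next
  case False
  have "n \<le> zp_val u" using L4 False assms by blast
  then have "qp_abs (zp_to_qp u) = real CARD('p) powi (int (zp_val (1::'p zp)) - int (zp_val u))"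
    unfolding zp_to_qp_def using Q1 False by simp
  also have "\<dots> \<le> real CARD('p) powi (- int n)"
    using val_one \<open>n \<le> zp_val u\<close> Pgt1 by (intro power_int_increasing) auto
  finally show ?thesis .
qed

lemma loc:
  fixes f :: "('r::finite \<Rightarrow> 'p zp) \<Rightarrow> 'p qp"
  assumes cont: "padic_continuous f" and nz: "\<forall>x. f x \<noteq> 0"
  shows "\<forall>x. \<exists>n. \<forall>y. (\<forall>i. Rep_zp (y i) n = Rep_zp (x i) n) \<longrightarrow> qp_abs (f y) = qp_abs (f x)"
proof
  fix x
  have ep: "qp_abs (f x) > 0" using Qpos nz by blast
  obtain \<delta> where d: "\<delta> > 0" "\<forall>y::'r \<Rightarrow> 'p zp. (\<forall>i. qp_abs (zp_to_qp (y i - x i)) < \<delta>) \<longrightarrow> qp_abs (f y - f x) < qp_abs (f x)"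
    using cont ep unfolding padic_continuous_def by blast
  have "1 / real CARD('p) < 1" using Pgt1 by simp
  then obtain n where n: "(1 / real CARD('p))^n < \<delta>" using real_arch_pow_inv d(1) by blast
  have pn: "real CARD('p) powi (- int n) < \<delta>"
    using n by (simp add: power_int_minus power_one_over inverse_eq_divide)
  show "\<exists>n. \<forall>y. (\<forall>i. Rep_zp (y i) n = Rep_zp (x i) n) \<longrightarrow> qp_abs (f y) = qp_abs (f x)"
  proof (intro exI allI impI)
    fix y :: "'r \<Rightarrow> 'p zp" assume ag: "\<forall>i. Rep_zp (y i) n = Rep_zp (x i) n"
    have "qp_abs (zp_to_qp (y i - x i)) < \<delta>" for i
    proof -
      have "Rep_zp (y i - x i) n = 0" using ag by (simp add: minus_zp.rep_eq)
      then show ?thesis using Qball pn by fastforce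
    qed
    then have lt: "qp_abs (f y - f x) < qp_abs (f x)" using d(2) by blast
    have "qp_abs (f y) = qp_abs ((f y - f x) + f x)" by simp
    also have "\<dots> \<le> max (qp_abs (f y - f x)) (qp_abs (f x))" by (rule Qadd)
    finally have le1: "qp_abs (f y) \<le> qp_abs (f x)" using lt by simp
    have "qp_abs (f x) = qp_abs (- (f y - f x) + f y)" by simp
    also have "\<dots> \<le> max (qp_abs (- (f y - f x))) (qp_abs (f y))" by (rule Qadd)
    moreover have "qp_abs (- (f y - f x)) = qp_abs (f y - f x)" by (rule Qneg)
    ultimately have le2: "qp_abs (f x) \<le> qp_abs (f y)" using lt by (auto simp only: max_def split: if_splits)
    show "qp_abs (f y) = qp_abs (f x)" using le1 le2 by simp
  qed
qed

lemma fin_range: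
  fixes g :: "('r::finite \<Rightarrow> 'p zp) \<Rightarrow> 'b"
  assumes loc: "\<forall>x. \<exists>n. \<forall>y. (\<forall>i. Rep_zp (y i) n = Rep_zp (x i) n) \<longrightarrow> g y = g x"
  shows "finite (range g)"
proof (rule ccontr)
  assume inf: "infinite (range g)"
  define Inv where "Inv n S \<longleftrightarrow> infinite (g ` S) \<and> (\<forall>y\<in>S. \<forall>z\<in>S. \<forall>i. Rep_zp (y i) n = Rep_zp (z i) n)"
    for n S
  have step: "\<exists>S'. S' \<subseteq> S \<and> Inv (Suc n) S'" if "Inv n S" for n S
  proof -
    let ?h = "\<lambda>y i. Rep_zp (y i) (Suc n)"
    let ?q = "int CARD('p) ^ Suc n"
    have "?h ` S \<subseteq> Pi UNIV (\<lambda>_. {0..<?q})" using rep_bnd by (auto simp del: power_Suc)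
    moreover have "finite (Pi UNIV (\<lambda>_::'r. {0..<?q}))"
      using finite_PiE[of UNIV "\<lambda>_::'r. {0..<?q}"] by (simp add: PiE_UNIV_domain)
    ultimately have fin: "finite (?h ` S)" by (rule finite_subset)
    have "g ` S = (\<Union>c\<in>?h ` S. g ` {y\<in>S. ?h y = c})"
    proof
      show "g ` S \<subseteq> (\<Union>c\<in>?h ` S. g ` {y\<in>S. ?h y = c})"
      proof
        fix w assume "w \<in> g ` S"
        then obtain y where y: "y \<in> S" "w = g y" by blast
        have "w \<in> g ` {y'\<in>S. ?h y' = ?h y}" using y by blast
        moreover have "?h y \<in> ?h ` S" using y by blast
        ultimately show "w \<in> (\<Union>c\<in>?h ` S. g ` {y\<in>S. ?h y = c})" by blast
      qed
      show "(\<Union>c\<in>?h ` S. g ` {y\<in>S. ?h y = c}) \<subseteq> g ` S" by blast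
    qed
    then have infU: "infinite (\<Union>c\<in>?h ` S. g ` {y\<in>S. ?h y = c})" using that Inv_def by simp
    have "\<exists>c\<in>?h ` S. infinite (g ` {y\<in>S. ?h y = c})"
    proof (rule ccontr)
      assume na: "\<not> ?thesis"
      have "finite (\<Union>c\<in>?h ` S. g ` {y\<in>S. ?h y = c})"
        by (rule finite_UN_I[OF fin]) (use na in blast)
      then show False using infU by blast
    qed
    then obtain c where c: "infinite (g ` {y\<in>S. ?h y = c})" by blast
    have "Inv (Suc n) {y\<in>S. ?h y = c}"
      unfolding Inv_def
    proof (intro conjI ballI allI)
      show "infinite (g ` {y\<in>S. ?h y = c})" by (rule c)
      fix y z i assume "y \<in> {y\<in>S. ?h y = c}" "z \<in> {y\<in>S. ?h y = c}"
      then have "?h y = ?h z" by simp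
      then show "Rep_zp (y i) (Suc n) = Rep_zp (z i) (Suc n)" by (rule fun_cong)
    qed
    moreover have "{y\<in>S. ?h y = c} \<subseteq> S" by (rule Collect_restrict)
    ultimately show ?thesis by (intro exI[of _ "{y\<in>S. ?h y = c}"] conjI)
  qed
  define F where "F n S = (SOME S'. S' \<subseteq> S \<and> Inv (Suc n) S')" for n S
  have F: "F n S \<subseteq> S \<and> Inv (Suc n) (F n S)" if "Inv n S" for n S
    unfolding F_def using step[OF that] by (rule someI_ex)
  define Sq where "Sq = rec_nat UNIV F"
  have Sq0: "Sq 0 = UNIV" and SqS: "Sq (Suc n) = F n (Sq n)" for n by (simp_all add: Sq_def)
  have Inv0: "Inv 0 UNIV" using inf by (simp add: Inv_def rep0)
  have I: "Inv n (Sq n)" for n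
  proof (induction n)
    case 0 show ?case using Inv0 Sq0 by simp
  next
    case (Suc n) show ?case using F[OF Suc] SqS[of n] by simp
  qed
  have sub: "Sq (Suc n) \<subseteq> Sq n" for n using F[OF I[of n]] SqS[of n] by simp
  have mono: "Sq n \<subseteq> Sq k" if "k \<le> n" for k n
    using lift_Suc_antimono_le[of Sq, OF sub that] .
  have ne: "Sq n \<noteq> {}" for n using I[of n] by (auto simp: Inv_def)
  define yy where "yy n = (SOME y. y \<in> Sq n)" for n
  have yy: "yy n \<in> Sq n" for n using ne[of n] by (simp add: yy_def some_in_eq)
  have agree: "Rep_zp (yy n i) k = Rep_zp (yy k i) k" if "k \<le> n" for k n i
  proof -
    have a: "yy n \<in> Sq k" using mono[OF that] yy[of n] by blast
    have "\<forall>y\<in>Sq k. \<forall>z\<in>Sq k. \<forall>i. Rep_zp (y i) k = Rep_zp (z i) k" using I[of k] unfolding Inv_def by blast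
    then show ?thesis using a yy[of k] by blast
  qed
  define xs where "xs i = (\<lambda>k. Rep_zp (yy k i) k)" for i
  have xs_in: "xs i \<in> zp_set CARD('p)" for i
    unfolding zp_set_def xs_def
  proof (intro CollectI allI conjI)
    fix k
    show "0 \<le> Rep_zp (yy k i) k" "Rep_zp (yy k i) k < int CARD('p) ^ k" using rep_bnd by auto
    have "Rep_zp (yy (Suc k) i) (Suc k) mod int CARD('p) ^ k = Rep_zp (yy (Suc k) i) k"
      by (rule rep_le) simp
    also have "\<dots> = Rep_zp (yy k i) k" by (rule agree) simp
    finally show "Rep_zp (yy (Suc k) i) (Suc k) mod int CARD('p) ^ k = Rep_zp (yy k i) k" .
  qed
  define x :: "'r \<Rightarrow> 'p zp" where "x i = Abs_zp (xs i)" for i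
  have xr: "Rep_zp (x i) k = Rep_zp (yy k i) k" for i k
  proof -
    have "Rep_zp (x i) = xs i" unfolding x_def by (rule Abs_zp_inverse[OF xs_in])
    then show ?thesis by (simp add: xs_def)
  qed
  obtain N where N: "\<forall>y. (\<forall>i. Rep_zp (y i) N = Rep_zp (x i) N) \<longrightarrow> g y = g x" using loc by blast
  have "g ` Sq N \<subseteq> {g x}"
  proof
    fix w assume "w \<in> g ` Sq N"
    then obtain y where y: "y \<in> Sq N" "w = g y" by blast
    have "Rep_zp (y i) N = Rep_zp (x i) N" for i
    proof -
      have "Rep_zp (y i) N = Rep_zp (yy N i) N"
        using I[of N] y(1) yy[of N] unfolding Inv_def by blast
      then show ?thesis using xr[of i N] by simp
    qed
    then have "\<forall>i. Rep_zp (y i) N = Rep_zp (x i) N" by blast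
    then have "g y = g x" using N by blast
    then show "w \<in> {g x}" using y(2) by simp
  qed
  then have "finite (g ` Sq N)" by (rule finite_subset) simp
  moreover have "infinite (g ` Sq N)" using I[of N] unfolding Inv_def by (rule conjunct1)
  ultimately show False by contradiction
qed

end

theorem lemma2p4:
  fixes f :: "('r::finite \<Rightarrow> 'p::prime_card zp) \<Rightarrow> 'p qp"
  assumes "padic_continuous f"
    and "\<forall>x. f x \<noteq> 0"
  shows "\<not> padic_dense (ratio_set f)"
proof -
  let ?g = "\<lambda>y. qp_abs (f y)"
  have fin: "finite (range ?g)" by (rule fin_range[OF loc[OF assms]])
  have pos: "?g y > 0" for y using Qpos assms(2) by blast
  define m where "m = Min (range ?g)"
  define M where "M = Max (range ?g)"
  have mle: "m \<le> ?g y" for y unfolding m_def using fin by (intro Min_le) auto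
  have Mge: "?g y \<le> M" for y unfolding M_def using fin by (intro Max_ge) auto
  have "m \<in> range ?g" unfolding m_def using fin by (intro Min_in) auto
  then have mpos: "m > 0" using pos by auto
  have Mpos: "M > 0" using pos[of undefined] Mge[of undefined] by linarith
  have eps: "m / M > 0" using mpos Mpos by simp
  have bound: "m / M \<le> qp_abs w" if wR: "w \<in> ratio_set f" for w
  proof -
    obtain X Y where w: "w = f X / f Y"
      using wR unfolding ratio_set_def by blast
    have "qp_abs w = ?g X / ?g Y" unfolding w by (rule Qdiv) (use assms(2) in blast)+
    also have "m / M \<le> ?g X / ?g Y"
      by (rule frac_le) (use mpos mle Mge pos less_imp_le in blast)+
    finally show ?thesis by simp
  qed
  show ?thesis unfolding padic_dense_def
  proof
    assume "\<forall>z. \<forall>\<epsilon>>0. \<exists>w\<in>ratio_set f. qp_abs (w - z) < \<epsilon>"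
    then obtain w where "w \<in> ratio_set f" "qp_abs (w - 0) < m / M" using eps by blast
    then show False using bound by force
  qed
qed

end
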